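(* The relation algebra $30_{65}$ has a representation on a finite set.
   Context: $30_{65}$ is the finite symmetric integral relation algebra with atoms $1',a,b,c$ whose mandatory diversity cycle types are exactly $aaa, ccc, abb, baa, caa, abc$ (so $bbb, acc, bcc, cbb$ are forbidden); a cycle type is the multiset of colors of the sides of a triangle, e.g. $baa$ = one side $b$, two sides $a$. A representation on a set $X$ is a coloring of all 2-element subsets of $X$ by $a,b,c$, each color used, such that: for every mandatory type $\{h,i,j\}$, every edge $\{x,y\}$ colored $h$ (for each choice of $h$ among the three colors of the type) and each ordering $(i,j)$ of the remaining two colors, some $z$ has $\{x,z\}$ colored $i$ and $\{z,y\}$ colored $j$; and no triangle of a forbidden type occurs. *)

theory Defs
  imports Main "HOL-Library.Multiset"
begin

text \<open>Diversity atoms of the relation algebra 30_65.\<close>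
datatype color = Ca | Cb | Cc

definition mandatory_30_65 :: "color multiset set" where
  "mandatory_30_65 = {{#Ca,Ca,Ca#}, {#Cc,Cc,Cc#}, {#Ca,Cb,Cb#}, {#Cb,Ca,Ca#},
                      {#Cc,Ca,Ca#}, {#Ca,Cb,Cc#}}"

definition forbidden_30_65 :: "color multiset set" where
  "forbidden_30_65 = {{#Cb,Cb,Cb#}, {#Ca,Cc,Cc#}, {#Cb,Cc,Cc#}, {#Cc,Cb,Cb#}}"

text \<open>A representation on X: a coloring of the 2-element subsets of X
  (given as a symmetric function on distinct pairs) by a, b, c.\<close>
definition is_representation_30_65 :: "'x set \<Rightarrow> ('x \<Rightarrow> 'x \<Rightarrow> color) \<Rightarrow> bool" where
  "is_representation_30_65 X col \<longleftrightarrow>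
     (\<forall>x\<in>X. \<forall>y\<in>X. x \<noteq> y \<longrightarrow> col x y = col y x)
   \<and> (\<forall>k. \<exists>x\<in>X. \<exists>y\<in>X. x \<noteq> y \<and> col x y = k)
   \<and> (\<forall>h i j. {#h,i,j#} \<in> mandatory_30_65 \<longrightarrow>
        (\<forall>x\<in>X. \<forall>y\<in>X. x \<noteq> y \<and> col x y = h \<longrightarrow>
           (\<exists>z\<in>X. z \<noteq> x \<and> z \<noteq> y \<and> col x z = i \<and> col z y = j)))
   \<and> (\<forall>x\<in>X. \<forall>y\<in>X. \<forall>z\<in>X. x \<noteq> y \<and> y \<noteq> z \<and> x \<noteq> z \<longrightarrow>
        {#col x y, col y z, col x z#} \<notin> forbidden_30_65)"

end

theory Submission
  imports Defs
begin

definition SS :: "nat list" where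
  "SS = [3,11,12,17,19,21,44,46,48,53,54,62]"

definition ff :: "nat \<Rightarrow> color" where
  "ff d = (if d mod 13 = 0 then Cc else if d \<in> set SS then Cb else Ca)"

definition DD :: "nat \<Rightarrow> nat \<Rightarrow> nat" where
  "DD x y = (y + 65 - x) mod 65"

definition colr :: "nat \<Rightarrow> nat \<Rightarrow> color" where
  "colr x y = ff (DD x y)"

definition cnt :: "color \<Rightarrow> color \<Rightarrow> color \<Rightarrow> color \<Rightarrow> nat" where
  "cnt k p q r = (if p = k then 1 else 0) + (if q = k then 1 else 0) + (if r = k then 1 else 0)"

definition isforb :: "color \<Rightarrow> color \<Rightarrow> color \<Rightarrow> bool" where
  "isforb p q r \<longleftrightarrow> cnt Cb p q r = 3 \<or> (cnt Ca p q r = 1 \<and> cnt Cc p q r = 2)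
     \<or> (cnt Cb p q r = 1 \<and> cnt Cc p q r = 2) \<or> (cnt Cc p q r = 1 \<and> cnt Cb p q r = 2)"

definition ismand :: "color \<Rightarrow> color \<Rightarrow> color \<Rightarrow> bool" where
  "ismand p q r \<longleftrightarrow> \<not> isforb p q r"

lemma forb_iff: "{#p,q,r#} \<in> forbidden_30_65 \<longleftrightarrow> isforb p q r"
  by (cases p; cases q; cases r) (simp_all add: forbidden_30_65_def isforb_def cnt_def add_mset_commute add_eq_conv_diff)

lemma mand_iff: "{#p,q,r#} \<in> mandatory_30_65 \<longleftrightarrow> ismand p q r"
  by (cases p; cases q; cases r) (simp_all add: mandatory_30_65_def ismand_def isforb_def cnt_def add_mset_commute add_eq_conv_diff)

lemma isforb_Ca: "isforb p q r \<Longrightarrow> p = Ca \<Longrightarrow> q \<noteq> Ca \<and> r \<noteq> Ca"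
  "isforb p q r \<Longrightarrow> q = Ca \<Longrightarrow> p \<noteq> Ca \<and> r \<noteq> Ca"
  by (cases p; cases q; cases r; simp add: isforb_def cnt_def)+

lemma ffv0[simp]: "ff 0 = Cc" by (simp add: ff_def)
lemma ffv1[simp]: "ff (Suc 0) = Ca" by (simp add: ff_def SS_def)
lemma ffv1'[simp]: "ff 1 = Ca" by (simp add: ff_def SS_def)
lemma ffv2[simp]: "ff 2 = Ca" by (simp add: ff_def SS_def)
lemma ffv3[simp]: "ff 3 = Cb" by (simp add: ff_def SS_def)
lemma ffv4[simp]: "ff 4 = Ca" by (simp add: ff_def SS_def)
lemma ffv5[simp]: "ff 5 = Ca" by (simp add: ff_def SS_def)
lemma ffv6[simp]: "ff 6 = Ca" by (simp add: ff_def SS_def)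
lemma ffv7[simp]: "ff 7 = Ca" by (simp add: ff_def SS_def)
lemma ffv8[simp]: "ff 8 = Ca" by (simp add: ff_def SS_def)
lemma ffv9[simp]: "ff 9 = Ca" by (simp add: ff_def SS_def)
lemma ffv10[simp]: "ff 10 = Ca" by (simp add: ff_def SS_def)
lemma ffv11[simp]: "ff 11 = Cb" by (simp add: ff_def SS_def)
lemma ffv12[simp]: "ff 12 = Cb" by (simp add: ff_def SS_def)
lemma ffv13[simp]: "ff 13 = Cc" by (simp add: ff_def SS_def)
lemma ffv14[simp]: "ff 14 = Ca" by (simp add: ff_def SS_def)
lemma ffv15[simp]: "ff 15 = Ca" by (simp add: ff_def SS_def)
lemma ffv16[simp]: "ff 16 = Ca" by (simp add: ff_def SS_def)
lemma ffv17[simp]: "ff 17 = Cb" by (simp add: ff_def SS_def)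
lemma ffv18[simp]: "ff 18 = Ca" by (simp add: ff_def SS_def)
lemma ffv19[simp]: "ff 19 = Cb" by (simp add: ff_def SS_def)
lemma ffv20[simp]: "ff 20 = Ca" by (simp add: ff_def SS_def)
lemma ffv21[simp]: "ff 21 = Cb" by (simp add: ff_def SS_def)
lemma ffv22[simp]: "ff 22 = Ca" by (simp add: ff_def SS_def)
lemma ffv23[simp]: "ff 23 = Ca" by (simp add: ff_def SS_def)
lemma ffv24[simp]: "ff 24 = Ca" by (simp add: ff_def SS_def)
lemma ffv25[simp]: "ff 25 = Ca" by (simp add: ff_def SS_def)
lemma ffv26[simp]: "ff 26 = Cc" by (simp add: ff_def SS_def)
lemma ffv27[simp]: "ff 27 = Ca" by (simp add: ff_def SS_def)
lemma ffv28[simp]: "ff 28 = Ca" by (simp add: ff_def SS_def)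
lemma ffv29[simp]: "ff 29 = Ca" by (simp add: ff_def SS_def)
lemma ffv30[simp]: "ff 30 = Ca" by (simp add: ff_def SS_def)
lemma ffv31[simp]: "ff 31 = Ca" by (simp add: ff_def SS_def)
lemma ffv32[simp]: "ff 32 = Ca" by (simp add: ff_def SS_def)
lemma ffv33[simp]: "ff 33 = Ca" by (simp add: ff_def SS_def)
lemma ffv34[simp]: "ff 34 = Ca" by (simp add: ff_def SS_def)
lemma ffv35[simp]: "ff 35 = Ca" by (simp add: ff_def SS_def)
lemma ffv36[simp]: "ff 36 = Ca" by (simp add: ff_def SS_def)
lemma ffv37[simp]: "ff 37 = Ca" by (simp add: ff_def SS_def)
lemma ffv38[simp]: "ff 38 = Ca" by (simp add: ff_def SS_def)
lemma ffv39[simp]: "ff 39 = Cc" by (simp add: ff_def SS_def)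
lemma ffv40[simp]: "ff 40 = Ca" by (simp add: ff_def SS_def)
lemma ffv41[simp]: "ff 41 = Ca" by (simp add: ff_def SS_def)
lemma ffv42[simp]: "ff 42 = Ca" by (simp add: ff_def SS_def)
lemma ffv43[simp]: "ff 43 = Ca" by (simp add: ff_def SS_def)
lemma ffv44[simp]: "ff 44 = Cb" by (simp add: ff_def SS_def)
lemma ffv45[simp]: "ff 45 = Ca" by (simp add: ff_def SS_def)
lemma ffv46[simp]: "ff 46 = Cb" by (simp add: ff_def SS_def)
lemma ffv47[simp]: "ff 47 = Ca" by (simp add: ff_def SS_def)
lemma ffv48[simp]: "ff 48 = Cb" by (simp add: ff_def SS_def)
lemma ffv49[simp]: "ff 49 = Ca" by (simp add: ff_def SS_def)
lemma ffv50[simp]: "ff 50 = Ca" by (simp add: ff_def SS_def)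
lemma ffv51[simp]: "ff 51 = Ca" by (simp add: ff_def SS_def)
lemma ffv52[simp]: "ff 52 = Cc" by (simp add: ff_def SS_def)
lemma ffv53[simp]: "ff 53 = Cb" by (simp add: ff_def SS_def)
lemma ffv54[simp]: "ff 54 = Cb" by (simp add: ff_def SS_def)
lemma ffv55[simp]: "ff 55 = Ca" by (simp add: ff_def SS_def)
lemma ffv56[simp]: "ff 56 = Ca" by (simp add: ff_def SS_def)
lemma ffv57[simp]: "ff 57 = Ca" by (simp add: ff_def SS_def)
lemma ffv58[simp]: "ff 58 = Ca" by (simp add: ff_def SS_def)
lemma ffv59[simp]: "ff 59 = Ca" by (simp add: ff_def SS_def)
lemma ffv60[simp]: "ff 60 = Ca" by (simp add: ff_def SS_def)
lemma ffv61[simp]: "ff 61 = Ca" by (simp add: ff_def SS_def)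
lemma ffv62[simp]: "ff 62 = Cb" by (simp add: ff_def SS_def)
lemma ffv63[simp]: "ff 63 = Ca" by (simp add: ff_def SS_def)
lemma ffv64[simp]: "ff 64 = Ca" by (simp add: ff_def SS_def)

definition TT :: "nat list" where "TT = [13,26,39,52] @ SS"

lemma chk1: "\<forall>d\<in>set TT. \<forall>e\<in>set TT. (d + e) mod 65 \<noteq> 0 \<longrightarrow>
   \<not> isforb (ff d) (ff e) (ff ((d + e) mod 65))"
  by (simp add: TT_def SS_def isforb_def cnt_def)

lemma chk2: "\<forall>v\<in>set TT. \<forall>w\<in>set TT. (w + 65 - v) mod 65 \<noteq> 0 \<longrightarrow>
   \<not> isforb (ff ((w + 65 - v) mod 65)) (ff v) (ff w)"
  by (simp add: TT_def SS_def isforb_def cnt_def)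

lemma chk3: "\<forall>u\<in>set TT. \<forall>w\<in>set TT. (w + 65 - u) mod 65 \<noteq> 0 \<longrightarrow>
   \<not> isforb (ff u) (ff ((w + 65 - u) mod 65)) (ff w)"
  by (simp add: TT_def SS_def isforb_def cnt_def)

definition L65 :: "nat list" where "L65 = [1,2,3,4,5,6,7,8,9,10,11,12,13,14,15,16,17,18,19,20,21,22,23,24,25,26,27,28,29,30,31,32,33,34,35,36,37,38,39,40,41,42,43,44,45,46,47,48,49,50,51,52,53,54,55,56,57,58,59,60,61,62,63,64]"

lemma upt65: "set L65 = {d. 0 < d \<and> d < 65}"
proof -
  have eq: "L65 = [1..<65]" unfolding L65_def by code_simp
  show ?thesis unfolding eq by auto
qed

lemma chkT: "\<forall>d\<in>set L65. ff d \<noteq> Ca \<longrightarrow> d \<in> set TT"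
  by (simp add: TT_def SS_def L65_def)

lemma chk_sym: "\<forall>d\<in>set L65. ff (65 - d) = ff d"
  by (simp add: L65_def)

definition wlCaCa :: "nat list" where "wlCaCa = [0,2,1,1,2,1,1,1,1,1,1,1,2,4,4,1,1,1,2,1,2,1,2,1,1,1,1,2,1,1,1,1,1,1,1,1,1,1,1,1,2,1,1,1,1,2,1,2,1,2,1,1,1,2,4,4,1,1,1,1,1,1,1,2,1]"
definition wlCaCb :: "nat list" where "wlCaCb = [0,4,5,6,1,2,9,4,5,6,7,8,1,1,2,4,4,5,1,2,1,2,1,2,5,4,5,6,7,8,9,10,15,14,15,14,15,16,27,18,23,20,23,22,23,1,2,1,2,1,2,5,4,5,1,1,2,4,4,5,6,7,8,1,2]"
definition wlCaCc :: "nat list" where "wlCaCc = [0,14,15,16,30,18,32,20,34,22,23,24,25,0,1,2,29,4,5,6,7,8,9,10,37,38,0,1,2,16,4,5,6,7,8,9,10,24,25,0,1,2,16,4,5,6,7,8,9,10,24,25,0,1,2,16,4,5,6,7,8,9,10,24,25]"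
definition wlCbCa :: "nat list" where "wlCbCa = [0,3,3,11,3,3,11,3,3,3,3,3,3,3,12,11,11,3,3,3,11,3,12,3,17,3,3,3,3,11,3,3,3,3,3,3,3,3,3,3,3,3,11,3,3,3,3,11,3,11,3,11,3,3,3,12,11,12,3,3,3,3,3,3,3]"
definition wlCbCb :: "nat list" where "wlCbCb = [0,12,19,0,21,17,3,19,11,12,21,0,0,0,3,3,19,0,21,0,3,0,3,11,3,44,0,44,11,12,11,12,11,12,17,46,17,48,17,0,19,44,21,46,0,48,0,3,0,3,53,3,0,0,0,11,3,3,12,11,12,17,0,17,11]"
definition wlCbCc :: "nat list" where "wlCbCc = [0,53,54,0,17,44,19,46,21,48,62,0,0,0,53,54,3,0,44,0,46,0,48,62,11,12,0,53,54,3,17,44,19,46,21,48,62,11,12,0,53,54,3,17,0,19,0,21,0,62,11,12,0,0,0,3,17,44,19,46,21,48,0,11,12]"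
definition wlCcCa :: "nat list" where "wlCcCa = [0,26,26,13,13,13,13,13,13,13,26,13,13,0,13,13,26,13,13,13,13,13,13,13,26,26,0,13,13,13,26,13,26,13,26,13,13,13,13,0,13,13,13,13,13,13,13,13,13,13,13,13,0,13,13,13,13,26,13,26,13,26,13,13,13]"
definition wlCcCb :: "nat list" where "wlCcCb = [0,13,13,0,52,26,52,26,52,26,13,0,0,0,26,26,13,0,39,0,39,0,39,26,13,13,0,39,39,26,13,52,13,52,13,52,39,26,26,0,52,52,39,26,0,26,0,26,0,52,39,39,0,0,0,52,39,13,39,13,39,13,0,52,52]"
definition wlCcCc :: "nat list" where "wlCcCc = [0,0,0,0,0,0,0,0,0,0,0,0,0,26,0,0,0,0,0,0,0,0,0,0,0,0,13,0,0,0,0,0,0,0,0,0,0,0,0,13,0,0,0,0,0,0,0,0,0,0,0,0,13,0,0,0,0,0,0,0,0,0,0,0,0]"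
definition WW :: "nat \<Rightarrow> color \<Rightarrow> color \<Rightarrow> nat" where
  "WW d i j = (case i of Ca \<Rightarrow> (case j of Ca \<Rightarrow> wlCaCa | Cb \<Rightarrow> wlCaCb | Cc \<Rightarrow> wlCaCc) | Cb \<Rightarrow> (case j of Ca \<Rightarrow> wlCbCa | Cb \<Rightarrow> wlCbCb | Cc \<Rightarrow> wlCbCc) | Cc \<Rightarrow> (case j of Ca \<Rightarrow> wlCcCa | Cb \<Rightarrow> wlCcCb | Cc \<Rightarrow> wlCcCc)) ! d"

lemma chk_mand: "\<forall>d\<in>set L65. \<forall>i\<in>{Ca,Cb,Cc}. \<forall>j\<in>{Ca,Cb,Cc}. ismand (ff d) i j \<longrightarrow>
   (0 < WW d i j \<and> WW d i j < 65 \<and> WW d i j \<noteq> d \<and> ff (WW d i j) = i \<and> ff ((d + 65 - WW d i j) mod 65) = j)"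
  by (simp add: L65_def WW_def wlCaCa_def wlCaCb_def wlCaCc_def wlCbCa_def wlCbCb_def wlCbCc_def wlCcCa_def wlCcCb_def wlCcCc_def ismand_def isforb_def cnt_def)


lemma mod65: "(a::nat) < 130 \<Longrightarrow> a mod 65 = (if a < 65 then a else a - 65)"
  by (simp add: le_mod_geq)
lemma DD_eq: "x < 65 \<Longrightarrow> y < 65 \<Longrightarrow> DD x y = (if x \<le> y then y - x else y + 65 - x)"
  unfolding DD_def by (subst mod65) auto
lemma DD_range: "x < 65 \<Longrightarrow> y < 65 \<Longrightarrow> x \<noteq> y \<Longrightarrow> 0 < DD x y \<and> DD x y < 65"
  by (simp add: DD_eq; arith)
lemma DD_sym: "x < 65 \<Longrightarrow> y < 65 \<Longrightarrow> x \<noteq> y \<Longrightarrow> DD y x = 65 - DD x y"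
  by (simp add: DD_eq; arith)
lemma DD_add: "x < 65 \<Longrightarrow> y < 65 \<Longrightarrow> z < 65 \<Longrightarrow> DD x z = (DD x y + DD y z) mod 65"
  by (simp add: DD_eq mod65 split: if_splits; arith)
lemma DD_w1: "x < 65 \<Longrightarrow> e < 65 \<Longrightarrow> DD x ((x + e) mod 65) = e"
  by (simp add: DD_eq mod65 split: if_splits; arith)
lemma DD_w2: "x < 65 \<Longrightarrow> y < 65 \<Longrightarrow> e < 65 \<Longrightarrow> DD ((x + e) mod 65) y = (DD x y + 65 - e) mod 65"
  by (simp add: DD_eq mod65 split: if_splits; arith)
lemma solve1: "(u::nat) < 65 \<Longrightarrow> v < 65 \<Longrightarrow> w = (u + v) mod 65 \<Longrightarrow> u = (w + 65 - v) mod 65"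
  by (simp add: mod65 split: if_splits; arith)
lemma solve2: "(u::nat) < 65 \<Longrightarrow> v < 65 \<Longrightarrow> w = (u + v) mod 65 \<Longrightarrow> v = (w + 65 - u) mod 65"
  by (simp add: mod65 split: if_splits; arith)

lemma inL: "0 < d \<Longrightarrow> d < 65 \<Longrightarrow> d \<in> set L65"
  using upt65 by auto

lemma inT: "0 < d \<Longrightarrow> d < 65 \<Longrightarrow> ff d \<noteq> Ca \<Longrightarrow> d \<in> set TT"
  using chkT inL by blast

lemma no_forb:
  assumes u: "0 < u" "u < 65" and v: "0 < v" "v < 65" and w: "0 < w" "w < 65"
    and wuv: "w = (u + v) mod 65"
  shows "\<not> isforb (ff u) (ff v) (ff w)"
proof
  assume F: "isforb (ff u) (ff v) (ff w)"
  show False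
  proof (cases "ff u = Ca")
    case True
    with F isforb_Ca(1) have "ff v \<noteq> Ca" "ff w \<noteq> Ca" by blast+
    then have "v \<in> set TT" "w \<in> set TT" using inT u v w by auto
    moreover have "u = (w + 65 - v) mod 65" using solve1 u v wuv by blast
    ultimately show False using chk2 F u by force
  next
    case False
    show False
    proof (cases "ff v = Ca")
      case True
      with F isforb_Ca(2) have "ff w \<noteq> Ca" by blast
      then have "u \<in> set TT" "w \<in> set TT" using inT u w False by auto
      moreover have "v = (w + 65 - u) mod 65" using solve2 u v wuv by blast
      ultimately show False using chk3 F v by force
    next
      case False2: False
      then have "u \<in> set TT" "v \<in> set TT" using inT u v False by auto
      then show False using chk1 F w wuv by force
    qed
  qed
qed

theorem mainTheorem7:
  shows "\<exists>(X :: nat set) col. finite X \<and> is_representation_30_65 X col"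
proof (intro exI conjI)
  show "finite {..<(65::nat)}" by simp
  show "is_representation_30_65 {..<65} colr"
    unfolding is_representation_30_65_def
  proof (intro conjI)
    show "\<forall>x\<in>{..<65}. \<forall>y\<in>{..<65}. x \<noteq> y \<longrightarrow> colr x y = colr y x"
    proof (intro ballI impI)
      fix x y :: nat assume "x \<in> {..<65}" "y \<in> {..<65}" "x \<noteq> y"
      then have xy: "x < 65" "y < 65" "x \<noteq> y" by auto
      have "DD x y \<in> set L65" using DD_range[OF xy] inL by blast
      then have "ff (65 - DD x y) = ff (DD x y)" using chk_sym by blast
      then show "colr x y = colr y x" unfolding colr_def using DD_sym[OF xy] by simp
    qed
  next
    show "\<forall>k. \<exists>x\<in>{..<65}. \<exists>y\<in>{..<65}. x \<noteq> y \<and> colr x y = k"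
    proof
      fix k show "\<exists>x\<in>{..<65}. \<exists>y\<in>{..<65}. x \<noteq> y \<and> colr x y = k"
      proof (cases k)
        case Ca
        have "colr 0 1 = Ca" by (simp add: colr_def DD_def)
        then show ?thesis using Ca by (intro bexI[of _ 0] bexI[of _ 1]) auto
      next
        case Cb
        have "colr 0 3 = Cb" by (simp add: colr_def DD_def)
        then show ?thesis using Cb by (intro bexI[of _ 0] bexI[of _ 3]) auto
      next
        case Cc
        have "colr 0 13 = Cc" by (simp add: colr_def DD_def)
        then show ?thesis using Cc by (intro bexI[of _ 0] bexI[of _ 13]) auto
      qed
    qed
  next
    show "\<forall>h i j. {#h, i, j#} \<in> mandatory_30_65 \<longrightarrow>
        (\<forall>x\<in>{..<65}. \<forall>y\<in>{..<65}. x \<noteq> y \<and> colr x y = h \<longrightarrow>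
           (\<exists>z\<in>{..<65}. z \<noteq> x \<and> z \<noteq> y \<and> colr x z = i \<and> colr z y = j))"
    proof (intro allI impI ballI)
      fix h i j x y
      assume M: "{#h, i, j#} \<in> mandatory_30_65" and "x \<in> {..<(65::nat)}" "y \<in> {..<(65::nat)}"
        and H: "x \<noteq> y \<and> colr x y = h"
      then have xy: "x < 65" "y < 65" "x \<noteq> y" by auto
      define d where "d = DD x y"
      have dL: "d \<in> set L65" using DD_range[OF xy] inL d_def by blast
      have hd: "ff d = h" using H unfolding d_def colr_def by simp
      have im: "ismand (ff d) i j" using M hd by (simp add: mand_iff)
      have ii: "i \<in> {Ca,Cb,Cc}" by (cases i) auto
      have jj: "j \<in> {Ca,Cb,Cc}" by (cases j) auto
      define e where "e = WW d i j"
      have E: "0 < e \<and> e < 65 \<and> e \<noteq> d \<and> ff e = i \<and> ff ((d + 65 - e) mod 65) = j"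
        using chk_mand[rule_format, OF dL ii jj im] unfolding e_def .
      define z where "z = (x + e) mod 65"
      have z1: "DD x z = e" unfolding z_def using DD_w1 xy(1) E by blast
      have z2: "DD z y = (d + 65 - e) mod 65" unfolding z_def d_def using DD_w2 xy(1,2) E by blast
      have zx: "z \<noteq> x"
      proof
        assume "z = x"
        then have "DD x z = 0" by (simp add: DD_def)
        with z1 E show False by simp
      qed
      have zy: "z \<noteq> y"
      proof
        assume "z = y"
        then have "DD x z = d" by (simp add: d_def)
        with z1 E show False by simp
      qed
      have zX: "z \<in> {..<65}" unfolding z_def by simp
      have c1: "colr x z = i" unfolding colr_def z1 using E by simp
      have c2: "colr z y = j" unfolding colr_def z2 using E by simp
      show "\<exists>z\<in>{..<65}. z \<noteq> x \<and> z \<noteq> y \<and> colr x z = i \<and> colr z y = j"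
        using zX zx zy c1 c2 by blast
    qed
  next
    show "\<forall>x\<in>{..<65}. \<forall>y\<in>{..<65}. \<forall>z\<in>{..<65}. x \<noteq> y \<and> y \<noteq> z \<and> x \<noteq> z \<longrightarrow>
        {#colr x y, colr y z, colr x z#} \<notin> forbidden_30_65"
    proof (intro ballI impI)
      fix x y z :: nat
      assume "x \<in> {..<65}" "y \<in> {..<65}" "z \<in> {..<65}" and D: "x \<noteq> y \<and> y \<noteq> z \<and> x \<noteq> z"
      then have b: "x < 65" "y < 65" "z < 65" by auto
      have u: "0 < DD x y" "DD x y < 65" using DD_range b D by auto
      have v: "0 < DD y z" "DD y z < 65" using DD_range b D by auto
      have w: "0 < DD x z" "DD x z < 65" using DD_range b D by auto
      have "DD x z = (DD x y + DD y z) mod 65" using DD_add b by blast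
      then have "\<not> isforb (ff (DD x y)) (ff (DD y z)) (ff (DD x z))"
        using no_forb u v w by blast
      then show "{#colr x y, colr y z, colr x z#} \<notin> forbidden_30_65"
        unfolding colr_def forb_iff .
    qed
  qed
qed

end
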